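(* Let $f_n(x)=\kappa_nx^{a_n}$ with $\kappa_n>0$ and $0<a_n<1$, and fix $B_n>0$. Then the function $p\mapsto\varphi_n(p,B_n)$ on $[p_n^{\min}(B_n),\infty)$ attains its maximum at $$p=\max\Big\{p_n^{\min}(B_n),\ \Big[\exp\Big(a_n+\tfrac{r_{n,e}\ln2}{B_n}+W\big((\tfrac{a_ng_np_n^{cir}}{\sigma_n^2B_n}-a_n)e^{-a_n-\frac{r_{n,e}\ln2}{B_n}}\big)\Big)-1\Big]\frac{\sigma_n^2B_n}{g_n}\Big\}.$$
   Context: Constants $g_n>0$, $\sigma_n^2>0$, $p_n^{cir}>0$, $r_{n,e}\ge0$, $r_n^{\min}>0$, $r_n^{\min}\ge r_{n,e}$. $r_n(p,B)=B\log_2(1+\frac{g_np}{\sigma_n^2B})$; $\varphi_n(p,B)=\frac{f_n(r_n(p,B)-r_{n,e})}{p+p_n^{cir}}$. $p_n^{\min}(B)=\frac{(2^{r_n^{\min}/B}-1)\sigma_n^2B}{g_n}$. $W$ is the principal branch of the Lambert $W$ function ($W(z)$, $z\ge-1/e$, is the solution $x\ge-1$ of $xe^x=z$). *)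

theory Defs
  imports Complex_Main
begin

text \<open>Principal branch of the Lambert W function: for z \<ge> -1/e, the unique x \<ge> -1 with x e^x = z.\<close>
definition lambertW :: "real \<Rightarrow> real" where
  "lambertW z = (THE x. x \<ge> -1 \<and> x * exp x = z)"

definition rate :: "real \<Rightarrow> real \<Rightarrow> real \<Rightarrow> real \<Rightarrow> real" where
  "rate g \<sigma>2 p B = B * log 2 (1 + g * p / (\<sigma>2 * B))"

definition phi :: "(real \<Rightarrow> real) \<Rightarrow> real \<Rightarrow> real \<Rightarrow> real \<Rightarrow> real \<Rightarrow> real \<Rightarrow> real \<Rightarrow> real" where
  "phi f g \<sigma>2 pcir re p B = f (rate g \<sigma>2 p B - re) / (p + pcir)"

definition pmin :: "real \<Rightarrow> real \<Rightarrow> real \<Rightarrow> real \<Rightarrow> real" where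
  "pmin g \<sigma>2 rmin B = (2 powr (rmin / B) - 1) * \<sigma>2 * B / g"

end

theory Submission imports Defs "HOL-Analysis.Analysis" begin

lemma xexp_strict_mono:
  fixes w t :: real assumes "-1 \<le> w" "w < t"
  shows "w * exp w < t * exp t"
proof -
  define d where "d = t - w"
  have d: "d > 0" using assms d_def by simp
  have et: "exp t = exp w * exp d" using d_def by (simp add: exp_add[symmetric])
  have "1 - d < exp (-d)" using exp_minus_greater d by simp
  hence "(1 - d) * exp d < exp (-d) * exp d" using exp_gt_zero by (intro mult_strict_right_mono) auto
  hence h1: "(1 - d) * exp d < 1" by (simp add: exp_minus_inverse mult.commute)
  have e0: "exp d - 1 > 0" using d by simp
  have "(-1) * (exp d - 1) \<le> w * (exp d - 1)" using assms(1) e0 by (intro mult_right_mono) auto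
  hence h2: "w * (exp d - 1) \<ge> -(exp d - 1)" by simp
  have "0 < w * (exp d - 1) + d * exp d" using h1 h2 by (simp add: algebra_simps)
  hence "0 < exp w * (w * (exp d - 1) + d * exp d)" by simp
  moreover have "t * exp t = (w + d) * (exp w * exp d)" using et d_def by simp
  ultimately show ?thesis by (simp add: algebra_simps)
qed

lemma xexp_mono:
  fixes w t :: real assumes "-1 \<le> w" "w \<le> t"
  shows "w * exp w \<le> t * exp t"
  using xexp_strict_mono[OF assms(1)] assms(2) by (cases "w = t") (auto intro: less_imp_le)

lemma lambertW_props:
  fixes z :: real assumes "z \<ge> - exp (-1)"
  shows "lambertW z \<ge> -1 \<and> lambertW z * exp (lambertW z) = z"
proof -
  define M where "M = max 1 z"
  have "\<exists>x. -1 \<le> x \<and> x \<le> M \<and> x * exp x = z"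
  proof (rule IVT')
    show "(-1) * exp (-1) \<le> z" using assms by simp
    have "M \<le> M * exp M" using M_def exp_ge_add_one_self[of M]
      by (smt (verit) mult_le_cancel_left1 one_le_exp_iff)
    thus "z \<le> M * exp M" using M_def by simp
    show "-1 \<le> M" using M_def by simp
    show "continuous_on {-1..M} (\<lambda>x::real. x * exp x)" by (intro continuous_intros)
  qed
  then obtain x where x: "-1 \<le> x" "x * exp x = z" by blast
  have uniq: "y = x" if "-1 \<le> y" "y * exp y = z" for y
    using xexp_strict_mono[of x y] xexp_strict_mono[of y x] x that by (cases "y < x"; cases "x < y") auto
  have "(THE y. y \<ge> -1 \<and> y * exp y = z) = x"
    by (rule the_equality) (use x uniq in blast)+
  thus ?thesis unfolding lambertW_def using x by simp
qed

lemma core: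
  fixes a K c x xq :: real
  assumes a: "0 < a" "a < 1" and xq: "xq > -1" and x: "x > -1"
    and sq: "ln (1 + xq) - c > 0" and s: "ln (1 + x) - c \<ge> 0"
    and xK: "x + K > 0" and xqK: "xq + K > 0"
    and cond: "a * (x - xq) / ((ln (1 + xq) - c) * (1 + xq)) \<le> (x - xq) / (xq + K)"
  shows "(ln (1 + x) - c) powr a / (x + K) \<le> (ln (1 + xq) - c) powr a / (xq + K)"
proof (cases "ln (1 + x) - c = 0")
  case True
  thus ?thesis using xqK by simp
next
  case False
  define S where "S = ln (1 + x) - c"
  define Sq where "Sq = ln (1 + xq) - c"
  define r where "r = S / Sq"
  have Spos: "S > 0" using False s S_def by simp
  have Sqpos: "Sq > 0" using sq Sq_def by simp
  have rpos: "r > 0" using Spos Sqpos r_def by simp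
  have "r powr a * 1 powr (1 - a) \<le> a * r + (1 - a) * 1"
    by (rule Youngs_inequality_0) (use a rpos in auto)
  hence y1: "r powr a \<le> 1 + a * (r - 1)" by (simp add: algebra_simps)
  have "ln ((1 + x) / (1 + xq)) \<le> (1 + x) / (1 + xq) - 1"
    by (rule ln_le_minus_one) (use x xq in simp)
  hence "ln (1 + x) - ln (1 + xq) \<le> (x - xq) / (1 + xq)"
    using x xq by (simp add: ln_divide_pos field_simps)
  hence "(ln (1 + x) - ln (1 + xq)) / Sq \<le> (x - xq) / (1 + xq) / Sq"
    using Sqpos by (intro divide_right_mono) auto
  moreover have "r - 1 = (ln (1 + x) - ln (1 + xq)) / Sq"
    using Sqpos unfolding r_def S_def Sq_def by (simp add: field_simps)
  ultimately have "r - 1 \<le> (x - xq) / ((1 + xq) * Sq)" by (simp add: divide_divide_eq_left)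
  hence "a * (r - 1) \<le> a * ((x - xq) / ((1 + xq) * Sq))"
    using a by (intro mult_left_mono) auto
  also have "\<dots> \<le> (x - xq) / (xq + K)" using cond unfolding Sq_def by (simp add: mult.commute)
  finally have "1 + a * (r - 1) \<le> 1 + (x - xq) / (xq + K)" by simp
  also have "\<dots> = (x + K) / (xq + K)" using xqK by (simp add: field_simps)
  finally have "r powr a \<le> (x + K) / (xq + K)" using y1 by linarith
  moreover have "S powr a = r powr a * Sq powr a"
    using Sqpos unfolding r_def by (simp add: powr_mult[symmetric])
  ultimately have "S powr a \<le> (x + K) / (xq + K) * Sq powr a"
    by (metis mult_right_mono powr_ge_zero)
  hence "S powr a / (x + K) \<le> (x + K) / (xq + K) * Sq powr a / (x + K)"
    by (rule divide_right_mono) (use xK in auto)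
  also have "\<dots> = Sq powr a / (xq + K)" using xK by simp
  finally show ?thesis unfolding S_def Sq_def .
qed

theorem lemma13:
  fixes g \<sigma>2 pcir re rmin \<kappa> a B :: real
  assumes "g > 0" and "\<sigma>2 > 0" and "pcir > 0" and "re \<ge> 0" and "rmin > 0" and "rmin \<ge> re"
    and "\<kappa> > 0" and "0 < a" and "a < 1" and "B > 0"
  defines "f \<equiv> (\<lambda>x. \<kappa> * x powr a)"
  defines "pstar \<equiv> max (pmin g \<sigma>2 rmin B)
      ((exp (a + re * ln 2 / B
          + lambertW ((a * g * pcir / (\<sigma>2 * B) - a) * exp (- a - re * ln 2 / B))) - 1)
        * \<sigma>2 * B / g)"
  shows "pstar \<ge> pmin g \<sigma>2 rmin B \<and>
         (\<forall>p. p \<ge> pmin g \<sigma>2 rmin B \<longrightarrow> phi f g \<sigma>2 pcir re p B \<le> phi f g \<sigma>2 pcir re pstar B)"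
proof -
  note g = \<open>g > 0\<close> and s2 = \<open>\<sigma>2 > 0\<close> and pc = \<open>pcir > 0\<close> and re = \<open>re \<ge> 0\<close>
    and rm = \<open>rmin > 0\<close> \<open>rmin \<ge> re\<close> and ka = \<open>\<kappa> > 0\<close> and a = \<open>0 < a\<close> \<open>a < 1\<close>
    and B = \<open>B > 0\<close>
  define X where "X = (\<lambda>p. g * p / (\<sigma>2 * B))"
  define K where "K = g * pcir / (\<sigma>2 * B)"
  define c where "c = re * ln 2 / B"
  define L where "L = \<sigma>2 * B / g"
  define C where "C = \<kappa> * (B / ln 2) powr a / L"
  define A where "A = (a * g * pcir / (\<sigma>2 * B) - a) * exp (- a - re * ln 2 / B)"
  define w where "w = lambertW A"
  define p1 where "p1 = (exp (a + c + w) - 1) * \<sigma>2 * B / g"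
  define P0 where "P0 = pmin g \<sigma>2 rmin B"
  have Lpos: "L > 0" using g s2 B L_def by simp
  have Kpos: "K > 0" using g s2 B pc K_def by simp
  have c0: "c \<ge> 0" using re B c_def by simp
  have ln2: "ln (2::real) > 0" by simp
  have Xadd: "p + pcir = L * (X p + K)" for p
    unfolding L_def X_def K_def using g s2 B by (simp add: field_simps)
  have Xmono: "X p \<le> X q" if "p \<le> q" for p q
    unfolding X_def using g s2 B that by (intro divide_right_mono mult_left_mono) auto
  have Xsmono: "X p < X q" if "p < q" for p q
    unfolding X_def using g s2 B that by (intro divide_strict_right_mono mult_strict_left_mono) auto
  have phi_eq: "phi f g \<sigma>2 pcir re p B = C * ((ln (1 + X p) - c) powr a / (X p + K))" for p
  proof -
    have r: "rate g \<sigma>2 p B - re = (B / ln 2) * (ln (1 + X p) - c)"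
      unfolding rate_def X_def c_def log_def using B by (simp add: field_simps)
    have "f (rate g \<sigma>2 p B - re) = \<kappa> * (B / ln 2) powr a * (ln (1 + X p) - c) powr a"
      unfolding f_def r powr_mult by (simp only: mult.assoc)
    thus ?thesis unfolding phi_def C_def Xadd using Lpos by (simp add: field_simps)
  qed
  have XP0: "X P0 = 2 powr (rmin / B) - 1"
    unfolding X_def P0_def pmin_def using g s2 B by (simp add: field_simps)
  have uP0: "ln (1 + X P0) = rmin / B * ln 2" unfolding XP0 by simp
  have uP0c: "ln (1 + X P0) \<ge> c"
    unfolding uP0 c_def using rm B by (simp add: divide_right_mono mult_right_mono)
  have XP0pos: "X P0 > 0" unfolding XP0 using rm B by simp
  have Ageq: "A > - a * exp (- a)"
  proof -
    have "A = a * (K - 1) * exp (- a - c)" unfolding A_def K_def c_def by (simp add: algebra_simps)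
    also have "\<dots> > (- a) * exp (- a - c)"
    proof (rule mult_strict_right_mono)
      have "a * K > 0" using Kpos a by simp
      thus "- a < a * (K - 1)" by (simp add: algebra_simps)
    qed simp
    finally have "A > - a * exp (- a - c)" .
    moreover have "exp (- a - c) \<le> exp (- a)" using c0 by simp
    moreover have "a * exp (- a - c) \<le> a * exp (- a)" using a \<open>exp (- a - c) \<le> exp (- a)\<close>
      by (intro mult_left_mono) auto
    ultimately show ?thesis by linarith
  qed
  have ae: "a * exp (- a) \<le> exp (-1)"
  proof -
    have "a \<le> exp (a - 1)" using exp_ge_add_one_self[of "a - 1"] by simp
    hence "a * exp (- a) \<le> exp (a - 1) * exp (- a)" by (simp add: mult_right_mono)
    also have "\<dots> = exp (-1)" by (simp add: exp_add[symmetric])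
    finally show ?thesis .
  qed
  have wp: "w \<ge> -1" "w * exp w = A"
    using lambertW_props[of A] Ageq ae unfolding w_def by auto
  have wa: "w > - a"
  proof (rule ccontr)
    assume "\<not> w > - a"
    hence "w * exp w \<le> (- a) * exp (- a)" using wp(1) xexp_mono[of w "- a"] by simp
    thus False using wp(2) Ageq by simp
  qed
  have Xp1: "X p1 = exp (a + c + w) - 1" unfolding X_def p1_def using g s2 B by (simp add: field_simps)
  have key: "a * K - a = w * exp (a + c + w)"
  proof -
    have "w * exp (a + c + w) = (w * exp w) * exp (a + c)" by (simp add: exp_add[symmetric] algebra_simps)
    also have "\<dots> = A * exp (a + c)" using wp by simp
    also have "\<dots> = a * K - a"
      unfolding A_def K_def c_def by (simp add: mult.assoc exp_add[symmetric])
    finally show ?thesis by simp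
  qed
  define q where "q = max P0 p1"
  have qdef: "pstar = q" unfolding pstar_def q_def P0_def p1_def c_def A_def w_def ..
  have qP0: "q \<ge> P0" unfolding q_def by simp
  have Xq: "X q > -1" using Xmono[OF qP0] XP0pos by simp
  have main: "ln (1 + X q) - c > 0 \<and>
     ((q = P0 \<and> a * (X q + K) \<le> (ln (1 + X q) - c) * (1 + X q)) \<or> a * (X q + K) = (ln (1 + X q) - c) * (1 + X q))"
  proof (cases "p1 \<ge> P0")
    case True
    hence qq: "q = p1" unfolding q_def by simp
    have u: "ln (1 + X q) = a + c + w" unfolding qq Xp1 by simp
    have "a * (X q + K) = (ln (1 + X q) - c) * (1 + X q)"
      unfolding u unfolding qq Xp1 using key by (simp add: algebra_simps)
    thus ?thesis using u wa by simp
  next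
    case False
    hence qq: "q = P0" unfolding q_def by simp
    define t where "t = ln (1 + X q) - c - a"
    have "X p1 < X q" using False qq Xsmono by simp
    hence e: "exp (a + c + w) < 1 + X q" by (simp add: Xp1)
    hence "ln (1 + X p1) < ln (1 + X q)" unfolding Xp1
      by (metis add.commute diff_add_cancel exp_gt_zero ln_exp ln_less_cancel_iff order.strict_trans)
    hence tw: "t > w" unfolding t_def Xp1 by simp
    hence "t * exp t > A" using xexp_strict_mono[OF wp(1) tw] wp by simp
    hence "t * exp t * exp (a + c) > A * exp (a + c)" by simp
    moreover have "A * exp (a + c) = a * K - a"
      unfolding A_def K_def c_def by (simp add: mult.assoc exp_add[symmetric])
    moreover have "exp t * exp (a + c) = 1 + X q"
      unfolding t_def using Xq by (simp add: exp_add[symmetric])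
    ultimately have "t * (1 + X q) > a * K - a" by (simp add: mult.assoc)
    hence "a * (X q + K) < (ln (1 + X q) - c) * (1 + X q)"
      unfolding t_def by (simp add: algebra_simps)
    moreover have "ln (1 + X q) - c > 0" using tw wa unfolding t_def by simp
    ultimately show ?thesis using qq by simp
  qed
  have ineq: "phi f g \<sigma>2 pcir re p B \<le> phi f g \<sigma>2 pcir re q B" if pP: "p \<ge> P0" for p
  proof -
    have XpP: "X p \<ge> X P0" using Xmono pP by simp
    have Xp: "X p > -1" using XpP XP0pos by simp
    have lnm: "ln (1 + X P0) \<le> ln (1 + X p)" using XpP XP0pos by simp
    have sq: "ln (1 + X q) - c > 0" and cnd: "(q = P0 \<and> a * (X q + K) \<le> (ln (1 + X q) - c) * (1 + X q)) \<or> a * (X q + K) = (ln (1 + X q) - c) * (1 + X q)"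
      using main by auto
    have pos: "(ln (1 + X q) - c) * (1 + X q) > 0" using sq Xq by simp
    have XqK: "X q + K > 0" using Xq XP0pos Kpos Xmono[OF qP0] by simp
    have cond: "a * (X p - X q) / ((ln (1 + X q) - c) * (1 + X q)) \<le> (X p - X q) / (X q + K)"
      using cnd
    proof
      assume h: "q = P0 \<and> a * (X q + K) \<le> (ln (1 + X q) - c) * (1 + X q)"
      hence d: "X p - X q \<ge> 0" using XpP by simp
      have "a / ((ln (1 + X q) - c) * (1 + X q)) \<le> 1 / (X q + K)"
        using h[THEN conjunct2] pos XqK by (simp add: divide_simps)
      hence "(X p - X q) * (a / ((ln (1 + X q) - c) * (1 + X q))) \<le> (X p - X q) * (1 / (X q + K))"
        using d by (rule mult_left_mono)
      thus ?thesis by (simp add: mult.commute)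
    next
      assume h: "a * (X q + K) = (ln (1 + X q) - c) * (1 + X q)"
      have "a / ((ln (1 + X q) - c) * (1 + X q)) = 1 / (X q + K)"
        using h pos XqK sq Xq by (simp add: divide_simps)
      hence "(X p - X q) * (a / ((ln (1 + X q) - c) * (1 + X q))) = (X p - X q) * (1 / (X q + K))"
        by simp
      thus ?thesis by (simp add: mult.commute)
    qed
    have "(ln (1 + X p) - c) powr a / (X p + K) \<le> (ln (1 + X q) - c) powr a / (X q + K)"
    proof (rule core[OF a Xq Xp sq _ _ XqK cond])
      show "0 \<le> ln (1 + X p) - c" using lnm uP0c by linarith
      show "0 < X p + K" using XpP XP0pos Kpos by linarith
    qed
    hence "C * ((ln (1 + X p) - c) powr a / (X p + K)) \<le> C * ((ln (1 + X q) - c) powr a / (X q + K))"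
      using Lpos ka unfolding C_def by (intro mult_left_mono) auto
    thus ?thesis unfolding phi_eq .
  qed
  show ?thesis unfolding qdef using qP0 ineq unfolding P0_def by auto
qed

end
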